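(* Let $j,k_G,k_H$ be positive integers with $j\le k_G\le k_H$, let $G$ be a $(j,k_G)$-biclique and $H$ a $(j,k_H)$-biclique, with $P_G(x)=(x)_{k_G}g(x)$ and $P_H(x)=(x)_{k_H}h(x)$. Let $c$ be an integer. Then $g(x)=(-1)^j h(-x+c)$ if and only if, for all $0\le i\le j$, $$m_{\bar G}^i=\sum_{l=0}^{i}(-1)^l\, m_{\bar H}^l\binom{j-l}{j-i}\,(k_G+k_H+j-c-l-1)_{i-l}.$$
   Context: All graphs are finite and simple. For integers $1\le j\le k$, a $(j,k)$-biclique is a graph whose vertex set is the disjoint union of a $j$-clique and a $k$-clique, with an arbitrary set of additional edges each joining a vertex of the $j$-clique to a vertex of the $k$-clique; $\bar G$ denotes the complement of $G$. $P_G(x)$ is the chromatic polynomial, and $(x)_n=x(x-1)\cdots(x-n+1)$ the falling factorial ($(x)_0=1$). For a $(j,k)$-biclique $G$, $(x)_k$ divides $P_G(x)$ and $g(x)=P_G(x)/(x)_k$ is a polynomial of degree $j$ (the interesting factor). $m_F^i$ denotes the number of matchings with $i$ edges in a graph $F$. *)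

theory Defs
  imports "HOL-Computational_Algebra.Polynomial" "HOL-Library.FuncSet"
begin

definition simple_graph :: "'a set \<Rightarrow> 'a set set \<Rightarrow> bool" where
  "simple_graph V E \<longleftrightarrow> finite V \<and> (\<forall>e\<in>E. e \<subseteq> V \<and> card e = 2)"

definition compl_edges :: "'a set \<Rightarrow> 'a set set \<Rightarrow> 'a set set" where
  "compl_edges V E = {e. e \<subseteq> V \<and> card e = 2} - E"

definition is_biclique :: "nat \<Rightarrow> nat \<Rightarrow> 'a set \<Rightarrow> 'a set set \<Rightarrow> bool" where
  "is_biclique j k V E \<longleftrightarrow> simple_graph V E \<and> 1 \<le> j \<and> j \<le> k \<and>
     (\<exists>A B. A \<inter> B = {} \<and> V = A \<union> B \<and> card A = j \<and> card B = k \<and>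
        (\<forall>u\<in>A. \<forall>v\<in>A. u \<noteq> v \<longrightarrow> {u,v} \<in> E) \<and>
        (\<forall>u\<in>B. \<forall>v\<in>B. u \<noteq> v \<longrightarrow> {u,v} \<in> E))"

definition proper_colourings :: "'a set \<Rightarrow> 'a set set \<Rightarrow> nat \<Rightarrow> ('a \<Rightarrow> nat) set" where
  "proper_colourings V E n =
     {f \<in> V \<rightarrow>\<^sub>E {0..<n}. \<forall>u\<in>V. \<forall>v\<in>V. {u,v} \<in> E \<longrightarrow> f u \<noteq> f v}"

definition chromatic_poly :: "'a set \<Rightarrow> 'a set set \<Rightarrow> real poly" where
  "chromatic_poly V E =
     (THE p. \<forall>n::nat. poly p (real n) = real (card (proper_colourings V E n)))"

definition falling_poly :: "nat \<Rightarrow> real poly" where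
  "falling_poly n = (\<Prod>i<n. [:- real i, 1:])"

definition falling_int :: "int \<Rightarrow> nat \<Rightarrow> int" where
  "falling_int x n = (\<Prod>i<n. (x - int i))"

definition num_matchings :: "'a set set \<Rightarrow> nat \<Rightarrow> nat" where
  "num_matchings E i = card {M. M \<subseteq> E \<and> card M = i \<and> pairwise disjnt M}"

end

theory Submission
  imports Defs "HOL-Computational_Algebra.Formal_Power_Series"
begin

definition ff :: "real \<Rightarrow> nat \<Rightarrow> real" where "ff z n = (\<Prod>i<n. z - real i)"

lemma ff_gchoose: "ff z n = fact n * (z gchoose n)"
  by (simp add: gbinomial_prod_rev ff_def atLeast0LessThan)

lemma ff_vandermonde:
  "ff (y + a) n = (\<Sum>t\<le>n. real (n choose t) * ff y (n - t) * ff a t)"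
proof -
  have "ff (y + a) n = fact n * ((a + y) gchoose n)" by (simp add: ff_gchoose add.commute)
  also have "\<dots> = fact n * (\<Sum>k=0..n. (a gchoose k) * (y gchoose (n - k)))"
    by (simp add: gbinomial_Vandermonde)
  also have "\<dots> = (\<Sum>k\<le>n. fact n * ((a gchoose k) * (y gchoose (n - k))))"
    by (simp add: sum_distrib_left atMost_atLeast0)
  also have "\<dots> = (\<Sum>t\<le>n. real (n choose t) * ff y (n - t) * ff a t)"
  proof (rule sum.cong)
    fix t assume "t \<in> {..n}"
    then have tn: "t \<le> n" by simp
    show "fact n * ((a gchoose t) * (y gchoose (n - t))) = real (n choose t) * ff y (n - t) * ff a t"
      using tn by (simp add: ff_gchoose binomial_fact field_simps)
  qed simp
  finally show ?thesis .
qed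

lemma ff_neg: "(-1) ^ n * ff w n = ff (- w + real n - 1) n"
proof -
  have "ff (- w + real n - 1) n = (\<Prod>i<n. (- w + real n - 1) - real (n - Suc i))"
    unfolding ff_def by (rule prod.nat_diff_reindex[symmetric])
  also have "\<dots> = (\<Prod>i<n. (-1) * (w - real i))"
    by (rule prod.cong) (auto simp: of_nat_diff)
  also have "\<dots> = (-1) ^ n * ff w n"
    unfolding prod.distrib ff_def by simp
  finally show ?thesis by simp
qed

lemma ff_add: "ff x (k + t) = ff x k * ff (x - real k) t"
  by (induct t) (simp_all add: ff_def algebra_simps)

lemma ff_nat_zero: "s < t \<Longrightarrow> ff (real s) t = 0"
  unfolding ff_def by (rule prod_zero) auto

lemma ff_nat_same: "ff (real s) s \<noteq> 0"
  unfolding ff_def by (simp add: prod_zero_iff)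

lemma ff_indep:
  assumes "\<And>y. (\<Sum>t\<le>j. e t * ff y t) = 0"
  shows "\<forall>t\<le>j. e t = 0"
proof -
  have "s \<le> j \<longrightarrow> e s = 0" for s
  proof (induct s rule: less_induct)
    case (less s)
    show ?case
    proof
      assume sj: "s \<le> j"
      have "(\<Sum>t\<le>j. e t * ff (real s) t) = (\<Sum>t\<le>j. if t = s then e s * ff (real s) s else 0)"
      proof (rule sum.cong)
        fix t assume t: "t \<in> {..j}"
        show "e t * ff (real s) t = (if t = s then e s * ff (real s) s else 0)"
        proof (cases "t < s")
          case True then show ?thesis using less t by auto
        next
          case False then show ?thesis using ff_nat_zero[of s t] by auto
        qed
      qed simp
      also have "\<dots> = e s * ff (real s) s" using sj by simp
      finally have "e s * ff (real s) s = 0" using assms by simp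
      then show "e s = 0" using ff_nat_same by simp
    qed
  qed
  then show ?thesis by blast
qed

lemma sum_rev_atMost: "(\<Sum>i\<le>j. F i) = (\<Sum>t\<le>j. F (j - t :: nat))"
  by (rule sum.reindex_bij_witness[where i="\<lambda>t. j - t" and j="\<lambda>i. j - i"]) auto

lemma poly_falling: "poly (falling_poly n) x = ff x n"
  by (simp add: falling_poly_def poly_prod ff_def)

lemma falling_poly_nz: "falling_poly n \<noteq> 0"
proof
  assume "falling_poly n = 0"
  then have "poly (falling_poly n) (real n) = 0" by simp
  then show False using ff_nat_same[of n] by (simp add: poly_falling)
qed

lemma poly_ext_nat:
  fixes p q :: "real poly"
  assumes "\<And>n::nat. poly p (real n) = poly q (real n)"
  shows "p = q"
proof (rule ccontr)
  assume "p \<noteq> q"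
  then have "p - q \<noteq> 0" by simp
  then have "finite {x. poly (p - q) x = 0}" by (rule poly_roots_finite)
  moreover have "range real \<subseteq> {x. poly (p - q) x = 0}" using assms by auto
  moreover have "infinite (range (real :: nat \<Rightarrow> real))"
    using range_inj_infinite[of real] inj_of_nat by blast
  ultimately show False using finite_subset by blast
qed

lemma real_prod_diff: "real (prod ((-) n) {0..<m}) = ff (real n) m"
proof (cases "m \<le> n")
  case True
  then show ?thesis unfolding ff_def of_nat_prod atLeast0LessThan
    by (intro prod.cong) (auto simp: of_nat_diff)
next
  case False
  then have "prod ((-) n) {0..<m} = 0" by (intro prod_zero) (auto intro!: bexI[of _ n])
  then show ?thesis using False ff_nat_zero[of n m] by simp
qed



locale bic =
  fixes V :: "'a set" and E :: "'a set set" and A B :: "'a set"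
  assumes sg: "simple_graph V E" and disj: "A \<inter> B = {}" and VAB: "V = A \<union> B"
    and cA: "\<And>u v. u \<in> A \<Longrightarrow> v \<in> A \<Longrightarrow> u \<noteq> v \<Longrightarrow> {u,v} \<in> E"
    and cB: "\<And>u v. u \<in> B \<Longrightarrow> v \<in> B \<Longrightarrow> u \<noteq> v \<Longrightarrow> {u,v} \<in> E"
begin

abbreviation "C \<equiv> compl_edges V E"
definition "Ms = {M. M \<subseteq> C \<and> pairwise disjnt M}"
definition "Mof f = {{a,b} | a b. a \<in> A \<and> b \<in> B \<and> f a = f b}"
definition "R M = V - (A \<inter> \<Union>M)"
definition "av e = (SOME a. a \<in> e \<inter> A)"

lemma finV: "finite V" using sg by (simp add: simple_graph_def)
lemma finA: "finite A" using finV VAB by simp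
lemma finB: "finite B" using finV VAB by simp

lemma E_card: "e \<in> E \<Longrightarrow> card e = 2" using sg by (simp add: simple_graph_def)

lemma edgeC: assumes "e \<in> C" shows "\<exists>a b. a \<in> A \<and> b \<in> B \<and> e = {a,b}"
proof -
  from assms have e: "e \<subseteq> V" "card e = 2" "e \<notin> E" by (auto simp: compl_edges_def)
  then obtain x y where xy: "e = {x,y}" "x \<noteq> y" by (auto simp: card_2_iff)
  then have "x \<in> V" "y \<in> V" using e by auto
  then show ?thesis using xy e cA[of x y] cB[of x y] VAB by (auto simp: insert_commute)
qed

lemma pair_eq: "a \<in> A \<Longrightarrow> b \<in> B \<Longrightarrow> a' \<in> A \<Longrightarrow> b' \<in> B \<Longrightarrow> {a,b} = {a',b'} \<Longrightarrow> a = a' \<and> b = b'"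
  using disj by (auto simp: doubleton_eq_iff)

lemma av_eq: "a \<in> A \<Longrightarrow> b \<in> B \<Longrightarrow> av {a,b} = a"
proof -
  assume "a \<in> A" "b \<in> B"
  then have "{a,b} \<inter> A = {a}" using disj by auto
  then show ?thesis unfolding av_def by simp
qed

lemma finC: "finite C"
proof -
  have "C \<subseteq> Pow V" by (auto simp: compl_edges_def)
  then show ?thesis using finV by (meson finite_Pow_iff finite_subset)
qed

lemma finMs: "finite Ms"
proof -
  have "Ms \<subseteq> Pow C" by (auto simp: Ms_def)
  then show ?thesis using finC by (meson finite_Pow_iff finite_subset)
qed

lemma M_in_C: "M \<in> Ms \<Longrightarrow> e \<in> M \<Longrightarrow> e \<in> C" by (auto simp: Ms_def)

lemma M_disj: "M \<in> Ms \<Longrightarrow> e1 \<in> M \<Longrightarrow> e2 \<in> M \<Longrightarrow> x \<in> e1 \<Longrightarrow> x \<in> e2 \<Longrightarrow> e1 = e2"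
  unfolding Ms_def pairwise_def disjnt_def by blast

lemma av_inj: assumes "M \<in> Ms" shows "inj_on av M"
proof (rule inj_onI)
  fix e1 e2 assume e: "e1 \<in> M" "e2 \<in> M" "av e1 = av e2"
  obtain a1 b1 where 1: "a1 \<in> A" "b1 \<in> B" "e1 = {a1,b1}" using edgeC M_in_C[OF assms e(1)] by blast
  obtain a2 b2 where 2: "a2 \<in> A" "b2 \<in> B" "e2 = {a2,b2}" using edgeC M_in_C[OF assms e(2)] by blast
  have "a1 = a2" using e(3) 1 2 av_eq by simp
  then show "e1 = e2" using M_disj[OF assms e(1) e(2), of a1] 1 2 by simp
qed

lemma av_image: assumes "M \<in> Ms" shows "av ` M = A \<inter> \<Union>M"
proof
  show "av ` M \<subseteq> A \<inter> \<Union>M"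
  proof
    fix x assume "x \<in> av ` M"
    then obtain e where e: "e \<in> M" "x = av e" by auto
    obtain a b where "a \<in> A" "b \<in> B" "e = {a,b}" using edgeC M_in_C[OF assms e(1)] by blast
    then show "x \<in> A \<inter> \<Union>M" using e av_eq by auto
  qed
next
  show "A \<inter> \<Union>M \<subseteq> av ` M"
  proof
    fix x assume "x \<in> A \<inter> \<Union>M"
    then obtain e where e: "e \<in> M" "x \<in> e" "x \<in> A" by auto
    obtain a b where ab: "a \<in> A" "b \<in> B" "e = {a,b}" using edgeC M_in_C[OF assms e(1)] by blast
    then have "x = a" using e disj by auto
    then have "av e = x" using ab av_eq by simp
    then show "x \<in> av ` M" using e(1) by blast
  qed
qed

lemma card_M: "M \<in> Ms \<Longrightarrow> card M = card (A \<inter> \<Union>M)"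
  using av_inj av_image card_image by metis

lemma card_M_le: "M \<in> Ms \<Longrightarrow> card M \<le> card A"
  using card_M finA by (simp add: card_mono)

lemma card_R: assumes M: "M \<in> Ms" shows "card (R M) = card V - card M"
proof -
  have sub: "A \<inter> \<Union>M \<subseteq> V" using VAB by auto
  have "finite (A \<inter> \<Union>M)" using finA by simp
  then have "card (R M) = card V - card (A \<inter> \<Union>M)" unfolding R_def using sub by (rule card_Diff_subset)
  then show ?thesis using card_M[OF M] by simp
qed

end


context bic begin

definition "pb M x = (SOME b. b \<in> B \<and> {x,b} \<in> M)"

lemma proper_D: "f \<in> proper_colourings V E n \<Longrightarrow> u \<in> V \<Longrightarrow> v \<in> V \<Longrightarrow> {u,v} \<in> E \<Longrightarrow> f u \<noteq> f v"
  by (auto simp: proper_colourings_def)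

lemma Mof_in: assumes f: "f \<in> proper_colourings V E n" shows "Mof f \<in> Ms"
  unfolding Ms_def
proof (intro CollectI conjI)
  show "Mof f \<subseteq> C"
  proof
    fix e assume "e \<in> Mof f"
    then obtain a b where ab: "a \<in> A" "b \<in> B" "f a = f b" "e = {a,b}" by (auto simp: Mof_def)
    then have "a \<noteq> b" using disj by auto
    moreover have "{a,b} \<notin> E" using proper_D[OF f, of a b] ab VAB by auto
    ultimately show "e \<in> C" using ab VAB by (auto simp: compl_edges_def)
  qed
next
  show "pairwise disjnt (Mof f)"
  proof (rule pairwiseI)
    fix e1 e2 assume e: "e1 \<in> Mof f" "e2 \<in> Mof f" "e1 \<noteq> e2"
    obtain a1 b1 where 1: "a1 \<in> A" "b1 \<in> B" "f a1 = f b1" "e1 = {a1,b1}" using e(1) by (auto simp: Mof_def)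
    obtain a2 b2 where 2: "a2 \<in> A" "b2 \<in> B" "f a2 = f b2" "e2 = {a2,b2}" using e(2) by (auto simp: Mof_def)
    show "disjnt e1 e2"
    proof (rule ccontr)
      assume "\<not> disjnt e1 e2"
      then have "a1 = a2 \<or> b1 = b2" using 1 2 disj by (auto simp: disjnt_def)
      then show False
      proof
        assume "a1 = a2"
        then have "b1 \<noteq> b2" using e(3) 1 2 by auto
        then show False using proper_D[OF f, of b1 b2] cB[of b1 b2] 1 2 \<open>a1 = a2\<close> VAB by auto
      next
        assume "b1 = b2"
        then have "a1 \<noteq> a2" using e(3) 1 2 by auto
        then show False using proper_D[OF f, of a1 a2] cA[of a1 a2] 1 2 \<open>b1 = b2\<close> VAB by auto
      qed
    qed
  qed
qed

lemma pb: assumes M: "M \<in> Ms" and x: "x \<in> A" "x \<in> \<Union>M" shows "pb M x \<in> B \<and> {x, pb M x} \<in> M"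
proof -
  obtain e where e: "e \<in> M" "x \<in> e" using x by auto
  obtain a b where ab: "a \<in> A" "b \<in> B" "e = {a,b}" using edgeC M_in_C[OF M e(1)] by blast
  then have "x = a" using e x disj by auto
  then have "\<exists>b. b \<in> B \<and> {x,b} \<in> M" using ab e by auto
  then show ?thesis unfolding pb_def by (rule someI_ex)
qed

lemma pb_uniq: assumes M: "M \<in> Ms" and x: "x \<in> A" "b \<in> B" "{x,b} \<in> M" shows "pb M x = b"
proof -
  have p: "pb M x \<in> B" "{x, pb M x} \<in> M" using pb[OF M x(1)] x by auto
  have "{x, pb M x} = {x,b}" using M_disj[OF M p(2) x(3), of x] by simp
  then show ?thesis using x p disj by (auto simp: doubleton_eq_iff)
qed

lemma B_sub_R: "B \<subseteq> R M"
  unfolding R_def using VAB disj by blast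

lemma R_sub_V: "R M \<subseteq> V"
  unfolding R_def by blast

lemma fib_inj: assumes M: "M \<in> Ms"
  shows "inj_on (\<lambda>f. restrict f (R M)) {f \<in> proper_colourings V E n. Mof f = M}"
proof (rule inj_onI)
  fix f1 f2 assume f1: "f1 \<in> {f \<in> proper_colourings V E n. Mof f = M}"
    and f2: "f2 \<in> {f \<in> proper_colourings V E n. Mof f = M}"
    and eq: "restrict f1 (R M) = restrict f2 (R M)"
  have P1: "f1 \<in> V \<rightarrow>\<^sub>E {0..<n}" and P2: "f2 \<in> V \<rightarrow>\<^sub>E {0..<n}"
    using f1 f2 by (auto simp: proper_colourings_def)
  have onR: "f1 x = f2 x" if "x \<in> R M" for x proof -
    have "restrict f1 (R M) x = restrict f2 (R M) x" using eq by simp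
    then show ?thesis using that by simp
  qed
  show "f1 = f2"
  proof
    fix x
    show "f1 x = f2 x"
    proof (cases "x \<in> V")
      case False then show ?thesis using PiE_arb[OF P1 False] PiE_arb[OF P2 False] by simp
    next
      case xV: True
      show ?thesis
      proof (cases "x \<in> R M")
        case True then show ?thesis using onR by simp
      next
        case False
        then have x: "x \<in> A" "x \<in> \<Union>M" using xV by (auto simp: R_def)
        have p: "pb M x \<in> B" "{x, pb M x} \<in> M" using pb[OF M x] by auto
        have bR: "pb M x \<in> R M" using p(1) B_sub_R by blast
        have key: "f x = f (pb M x)" if "Mof f = M" for f
        proof -
          have "{x, pb M x} \<in> Mof f" using p that by simp
          then obtain a b where ab: "a \<in> A" "b \<in> B" "f a = f b" "{x, pb M x} = {a,b}"
            by (auto simp: Mof_def)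
          have "x = a \<and> pb M x = b" using pair_eq[OF x(1) p(1) ab(1) ab(2) ab(4)] .
          then show ?thesis using ab(3) by metis
        qed
        have "f1 x = f1 (pb M x)" using key f1 by blast
        also have "\<dots> = f2 (pb M x)" using onR bR by simp
        also have "\<dots> = f2 x" using key f2 by (metis (mono_tags, lifting) mem_Collect_eq)
        finally show ?thesis .
      qed
    qed
  qed
qed

end

context bic begin

lemma fib_sub: assumes M: "M \<in> Ms"
  shows "(\<lambda>f. restrict f (R M)) ` {f \<in> proper_colourings V E n. Mof f = M}
    \<subseteq> {g \<in> R M \<rightarrow>\<^sub>E {0..<n}. inj_on g (R M)}"
proof
  fix g assume "g \<in> (\<lambda>f. restrict f (R M)) ` {f \<in> proper_colourings V E n. Mof f = M}"
  then obtain f where f: "f \<in> proper_colourings V E n" "Mof f = M" and g: "g = restrict f (R M)" by auto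
  have P: "f \<in> V \<rightarrow>\<^sub>E {0..<n}" using f by (auto simp: proper_colourings_def)
  have "g \<in> R M \<rightarrow>\<^sub>E {0..<n}" using P R_sub_V unfolding g by (auto simp: PiE_iff)
  moreover have "inj_on g (R M)"
  proof (rule inj_onI, rule ccontr)
    fix x y assume xy: "x \<in> R M" "y \<in> R M" "g x = g y" "x \<noteq> y"
    then have fxy: "f x = f y" unfolding g by simp
    have V: "x \<in> V" "y \<in> V" using xy R_sub_V by auto
    have notm: "\<not> (z \<in> A \<and> z \<in> \<Union>M)" if "z \<in> R M" for z using that unfolding R_def by blast
    have AB: "x \<in> A \<or> x \<in> B" "y \<in> A \<or> y \<in> B" using V VAB by auto
    show False
    proof (cases "x \<in> A")
      case xA: True
      show False
      proof (cases "y \<in> A")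
        case True then show False using cA[OF xA True xy(4)] proper_D[OF f(1) V] fxy by simp
      next
        case False then have "y \<in> B" using AB by simp
        then have "{x,y} \<in> Mof f" using xA fxy unfolding Mof_def by blast
        then show False using f(2) notm[OF xy(1)] xA by auto
      qed
    next
      case xnA: False
      then have xB: "x \<in> B" using AB by simp
      show False
      proof (cases "y \<in> A")
        case True
        then have "{y,x} \<in> Mof f" using xB fxy unfolding Mof_def by force
        then show False using f(2) notm[OF xy(2)] True by auto
      next
        case False then have "y \<in> B" using AB by simp
        then show False using cB[OF xB _ xy(4)] proper_D[OF f(1) V] fxy by simp
      qed
    qed
  qed
  ultimately show "g \<in> {g \<in> R M \<rightarrow>\<^sub>E {0..<n}. inj_on g (R M)}" by simp
qed


lemma fib_sup: assumes M: "M \<in> Ms"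
  shows "{g \<in> R M \<rightarrow>\<^sub>E {0..<n}. inj_on g (R M)}
    \<subseteq> (\<lambda>f. restrict f (R M)) ` {f \<in> proper_colourings V E n. Mof f = M}"
proof
  fix g assume "g \<in> {g \<in> R M \<rightarrow>\<^sub>E {0..<n}. inj_on g (R M)}"
  then have gP: "g \<in> R M \<rightarrow>\<^sub>E {0..<n}" and gi: "inj_on g (R M)" by auto
  define \<rho> where "\<rho> x = (if x \<in> A \<and> x \<in> \<Union>M then pb M x else x)" for x
  define f where "f x = (if x \<in> V then g (\<rho> x) else undefined)" for x
  have \<rho>R: "\<rho> x \<in> R M" if "x \<in> V" for x
  proof (cases "x \<in> A \<and> x \<in> \<Union>M")
    case True then show ?thesis using pb[OF M] B_sub_R unfolding \<rho>_def by auto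
  next
    case False then show ?thesis using that unfolding \<rho>_def R_def by auto
  qed
  have \<rho>B: "\<rho> b = b" if "b \<in> B" for b using that disj unfolding \<rho>_def by auto
  have feq: "f x = f y \<Longrightarrow> x \<in> V \<Longrightarrow> y \<in> V \<Longrightarrow> \<rho> x = \<rho> y" for x y
    using gi \<rho>R unfolding f_def by (auto dest: inj_onD)
  have fP: "f \<in> V \<rightarrow>\<^sub>E {0..<n}"
    using gP \<rho>R unfolding f_def by (auto simp: PiE_iff extensional_def)
  have proper: "f u \<noteq> f v" if uv: "u \<in> V" "v \<in> V" "{u,v} \<in> E" for u v
  proof
    assume "f u = f v"
    then have r: "\<rho> u = \<rho> v" using feq uv by blast
    have "card {u,v} = 2" using E_card uv(3) by blast
    then have une: "u \<noteq> v" by auto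
    have CE: "e \<in> M \<Longrightarrow> e \<notin> E" for e using M_in_C[OF M] by (auto simp: compl_edges_def)
    show False
    proof (cases "u \<in> A \<and> u \<in> \<Union>M")
      case um: True
      show False
      proof (cases "v \<in> A \<and> v \<in> \<Union>M")
        case vm: True
        have pu: "pb M u \<in> B" "{u, pb M u} \<in> M" using pb[OF M] um by auto
        have pv: "pb M v \<in> B" "{v, pb M v} \<in> M" using pb[OF M] vm by auto
        have "pb M u = pb M v" using r um vm unfolding \<rho>_def by simp
        then have "{u, pb M u} = {v, pb M v}" using M_disj[OF M pu(2) pv(2), of "pb M u"] by simp
        then show False using pair_eq[of u "pb M u" v "pb M v"] um vm pu pv une by blast
      next
        case vn: False
        then have "pb M u = v" using r um vn unfolding \<rho>_def by auto
        then have "{u,v} \<in> M" using pb[OF M] um by metis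
        then show False using CE uv(3) by blast
      qed
    next
      case un: False
      show False
      proof (cases "v \<in> A \<and> v \<in> \<Union>M")
        case vm: True
        then have "pb M v = u" using r un vm unfolding \<rho>_def by auto
        then have "{v,u} \<in> M" using pb[OF M] vm by metis
        then show False using CE uv(3) by (metis insert_commute)
      next
        case vn: False
        then show False using r un une unfolding \<rho>_def by auto
      qed
    qed
  qed
  have fPC: "f \<in> proper_colourings V E n"
    unfolding proper_colourings_def using fP proper by blast
  have fM: "Mof f = M"
  proof
    show "Mof f \<subseteq> M"
    proof
      fix e assume "e \<in> Mof f"
      then obtain a b where ab: "a \<in> A" "b \<in> B" "f a = f b" "e = {a,b}" by (auto simp: Mof_def)
      have V: "a \<in> V" "b \<in> V" using ab VAB by auto
      have "\<rho> a = b" using feq[OF ab(3) V] \<rho>B[OF ab(2)] by simp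
      moreover have "a \<noteq> b" using ab disj by auto
      ultimately have am: "a \<in> A \<and> a \<in> \<Union>M" and "pb M a = b" unfolding \<rho>_def by (auto split: if_splits)
      then show "e \<in> M" using pb[OF M] ab by metis
    qed
  next
    show "M \<subseteq> Mof f"
    proof
      fix e assume e: "e \<in> M"
      obtain a b where ab: "a \<in> A" "b \<in> B" "e = {a,b}" using edgeC M_in_C[OF M e] by blast
      have am: "a \<in> A \<and> a \<in> \<Union>M" using ab e by auto
      have "pb M a = b" using pb_uniq[OF M ab(1) ab(2)] e ab by simp
      then have "\<rho> a = \<rho> b" using am \<rho>B[OF ab(2)] unfolding \<rho>_def by simp
      moreover have "a \<in> V" "b \<in> V" using ab VAB by auto
      ultimately have "f a = f b" unfolding f_def by simp
      then show "e \<in> Mof f" using ab unfolding Mof_def by blast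
    qed
  qed
  have fr: "restrict f (R M) = g"
  proof
    fix x show "restrict f (R M) x = g x"
    proof (cases "x \<in> R M")
      case True
      then have "x \<in> V" "\<not> (x \<in> A \<and> x \<in> \<Union>M)" unfolding R_def by auto
      then show ?thesis using True unfolding f_def \<rho>_def by auto
    next
      case False then show ?thesis using PiE_arb[OF gP False] by simp
    qed
  qed
  show "g \<in> (\<lambda>f. restrict f (R M)) ` {f \<in> proper_colourings V E n. Mof f = M}"
    using fPC fM fr by force
qed


lemma fib_card: assumes M: "M \<in> Ms"
  shows "card {f \<in> proper_colourings V E n. Mof f = M} = prod ((-) n) {0..<card V - card M}"
proof -
  have "card {f \<in> proper_colourings V E n. Mof f = M}
      = card ((\<lambda>f. restrict f (R M)) ` {f \<in> proper_colourings V E n. Mof f = M})"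
    using card_image[OF fib_inj[OF M]] by simp
  also have "\<dots> = card {g \<in> R M \<rightarrow>\<^sub>E {0..<n}. inj_on g (R M)}"
    by (rule arg_cong[where f=card], rule subset_antisym[OF fib_sub[OF M] fib_sup[OF M]])
  also have "\<dots> = prod ((-) n) {0..<card (R M)}"
    using card_inj_on_subset_funcset[OF finite_subset[OF R_sub_V finV] finite_atLeastLessThan[of 0 n] order_refl]
    by (simp only: card_atLeastLessThan diff_self_eq_0 power_0 mult_1 diff_zero)
  finally show ?thesis using card_R[OF M] by simp
qed

lemma count:
  "card (proper_colourings V E n) =
     (\<Sum>i\<le>card A. num_matchings C i * prod ((-) n) {0..<card V - i})"
proof -
  let ?fib = "\<lambda>M. {f \<in> proper_colourings V E n. Mof f = M}"
  have finPC: "finite (proper_colourings V E n)"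
  proof -
    have "proper_colourings V E n \<subseteq> V \<rightarrow>\<^sub>E {0..<n}" by (auto simp: proper_colourings_def)
    then show ?thesis using finite_PiE[OF finV, of "\<lambda>_. {0..<n}"] finite_subset by blast
  qed
  have U: "proper_colourings V E n = (\<Union>M\<in>Ms. ?fib M)" using Mof_in by blast
  have "card (\<Union>M\<in>Ms. ?fib M) = (\<Sum>M\<in>Ms. card (?fib M))"
  proof (rule card_UN_disjoint[OF finMs])
    show "\<forall>i\<in>Ms. finite (?fib i)" using finPC by simp
    show "\<forall>i\<in>Ms. \<forall>j\<in>Ms. i \<noteq> j \<longrightarrow> ?fib i \<inter> ?fib j = {}" by blast
  qed
  then have "card (proper_colourings V E n) = (\<Sum>M\<in>Ms. card (?fib M))"
    by (subst U) assumption
  also have "\<dots> = (\<Sum>M\<in>Ms. prod ((-) n) {0..<card V - card M})"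
    using fib_card by simp
  also have "\<dots> = (\<Sum>i\<le>card A. \<Sum>M\<in>{M. M \<in> Ms \<and> card M = i}. prod ((-) n) {0..<card V - card M})"
    by (rule sum.group[symmetric]) (use finMs card_M_le in auto)
  also have "\<dots> = (\<Sum>i\<le>card A. num_matchings C i * prod ((-) n) {0..<card V - i})"
  proof (rule sum.cong)
    fix i
    have "{M. M \<in> Ms \<and> card M = i} = {M. M \<subseteq> C \<and> card M = i \<and> pairwise disjnt M}"
      by (auto simp: Ms_def)
    then show "(\<Sum>M\<in>{M. M \<in> Ms \<and> card M = i}. prod ((-) n) {0..<card V - card M}) =
        num_matchings C i * prod ((-) n) {0..<card V - i}"
      unfolding num_matchings_def by simp
  qed simp
  finally show ?thesis .
qed

end


lemma chrom_formula:
  assumes bq: "is_biclique j k V E"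
  shows "chromatic_poly V E = falling_poly k *
    (\<Sum>i\<le>j. smult (real (num_matchings (compl_edges V E) i)) (pcompose (falling_poly (j - i)) [:- real k, 1:]))"
proof -
  from bq obtain A B where sg: "simple_graph V E" and jk: "j \<le> k" and AB: "A \<inter> B = {}" "V = A \<union> B"
    "card A = j" "card B = k" and cA: "\<forall>u\<in>A. \<forall>v\<in>A. u \<noteq> v \<longrightarrow> {u,v} \<in> E"
    and cB: "\<forall>u\<in>B. \<forall>v\<in>B. u \<noteq> v \<longrightarrow> {u,v} \<in> E"
    unfolding is_biclique_def by blast
  interpret bic V E A B using sg AB cA cB by unfold_locales auto
  have cV: "card V = j + k" using AB finA finB by (simp add: card_Un_disjoint)
  let ?m = "\<lambda>i. real (num_matchings (compl_edges V E) i)"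
  define P0 where "P0 = (\<Sum>i\<le>j. smult (?m i) (falling_poly (j + k - i)))"
  have P0n: "poly P0 (real n) = real (card (proper_colourings V E n))" for n
  proof -
    have "real (card (proper_colourings V E n)) = (\<Sum>i\<le>j. ?m i * real (prod ((-) n) {0..<card V - i}))"
      using count[of n] AB(3) by simp
    also have "\<dots> = poly P0 (real n)"
      unfolding P0_def cV by (simp add: poly_sum poly_falling real_prod_diff del: of_nat_prod)
    finally show ?thesis by simp
  qed
  have ch: "chromatic_poly V E = P0"
    unfolding chromatic_poly_def
  proof (rule the_equality)
    show "\<forall>n. poly P0 (real n) = real (card (proper_colourings V E n))" using P0n by simp
    fix p assume "\<forall>n. poly p (real n) = real (card (proper_colourings V E n))"
    then show "p = P0" using P0n by (intro poly_ext_nat) simp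
  qed
  show ?thesis unfolding ch
  proof (rule poly_eq_poly_eq_iff[THEN iffD1], rule ext)
    fix x
    have "poly P0 x = (\<Sum>i\<le>j. ?m i * ff x (k + (j - i)))"
      unfolding P0_def poly_sum by (intro sum.cong) (auto simp: poly_falling add.commute)
    also have "\<dots> = ff x k * (\<Sum>i\<le>j. ?m i * ff (x - real k) (j - i))"
      unfolding sum_distrib_left by (rule sum.cong[OF refl]) (subst ff_add, simp add: mult_ac)
    finally show "poly P0 x = poly (falling_poly k * (\<Sum>i\<le>j. smult (?m i) (pcompose (falling_poly (j - i)) [:- real k, 1:]))) x"
      by (simp add: poly_sum poly_falling poly_pcompose)
  qed
qed

lemma poly_G0:
  "poly (\<Sum>i\<le>j. smult (m i) (pcompose (falling_poly (j - i)) [:- real k, 1:])) x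
    = (\<Sum>i\<le>j. m i * ff (x - real k) (j - i))"
  by (simp add: poly_sum poly_falling poly_pcompose)

lemma falling_int_real: "real_of_int (falling_int z n) = ff (real_of_int z) n"
  unfolding falling_int_def ff_def by (simp add: of_int_prod)



lemma key_identity:
  fixes mH :: "nat \<Rightarrow> real" and kG kH j :: nat and c x :: real
  defines "a \<equiv> \<lambda>l::nat. real kG + real kH + real j - c - real l - 1"
  shows "(-1) ^ j * (\<Sum>l\<le>j. mH l * ff (c - x - real kH) (j - l)) =
    (\<Sum>i\<le>j. (\<Sum>l=0..i. (-1) ^ l * mH l * real ((j - l) choose (j - i)) * ff (a l) (i - l))
        * ff (x - real kG) (j - i))"
proof -
  define y where "y = x - real kG"
  define F where "F l t = (-1) ^ l * mH l * real ((j - l) choose t) * ff (a l) t * ff y (j - l - t)" for l t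
  have step1: "(-1) ^ j * (mH l * ff (c - x - real kH) (j - l)) = (\<Sum>t\<le>j - l. F l t)" if "l \<le> j" for l
  proof -
    have "(-1::real) ^ j = (-1) ^ l * (-1) ^ (j - l)"
      using that by (simp add: power_add[symmetric])
    then have "(-1) ^ j * (mH l * ff (c - x - real kH) (j - l))
        = (-1) ^ l * mH l * ((-1) ^ (j - l) * ff (c - x - real kH) (j - l))" by simp
    also have "(-1) ^ (j - l) * ff (c - x - real kH) (j - l) = ff (y + a l) (j - l)"
      unfolding ff_neg using that by (simp add: y_def a_def of_nat_diff algebra_simps)
    also have "ff (y + a l) (j - l) = (\<Sum>t\<le>j - l. real ((j - l) choose t) * ff y (j - l - t) * ff (a l) t)"
      by (rule ff_vandermonde)
    finally show ?thesis unfolding F_def by (simp add: sum_distrib_left mult_ac)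
  qed
  have "(-1) ^ j * (\<Sum>l\<le>j. mH l * ff (c - x - real kH) (j - l)) = (\<Sum>l\<le>j. \<Sum>t\<le>j - l. F l t)"
    unfolding sum_distrib_left using step1 by (intro sum.cong) auto
  also have "\<dots> = (\<Sum>(l,t)\<in>Sigma {..j} (\<lambda>l. {..j - l}). F l t)"
    by (rule sum.Sigma) auto
  also have "Sigma {..j} (\<lambda>l. {..j - l}) = {(l,t). l + t \<le> j}" by auto
  also have "(\<Sum>(l,t)\<in>{(l,t). l + t \<le> j}. F l t) = (\<Sum>i\<le>j. \<Sum>l\<le>i. F l (i - l))"
    by (rule sum.triangle_reindex_eq)
  also have "\<dots> = (\<Sum>i\<le>j. (\<Sum>l=0..i. (-1) ^ l * mH l * real ((j - l) choose (j - i)) * ff (a l) (i - l))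
        * ff (x - real kG) (j - i))"
  proof (rule sum.cong[OF refl])
    fix i assume "i \<in> {..j}"
    then have ij: "i \<le> j" by simp
    have "F l (i - l) = (-1) ^ l * mH l * real ((j - l) choose (j - i)) * ff (a l) (i - l) * ff y (j - i)"
      if "l \<in> {..i}" for l
    proof -
      have li: "l \<le> i" using that by simp
      have "j - l - (i - l) = j - i" using li ij by simp
      moreover have "(j - l) choose (i - l) = (j - l) choose (j - i)"
        using binomial_symmetric[of "i - l" "j - l"] li ij by simp
      ultimately show ?thesis unfolding F_def by simp
    qed
    then show "(\<Sum>l\<le>i. F l (i - l)) = (\<Sum>l=0..i. (-1) ^ l * mH l * real ((j - l) choose (j - i)) * ff (a l) (i - l))
        * ff (x - real kG) (j - i)"
      unfolding sum_distrib_right y_def atMost_atLeast0 by (intro sum.cong) auto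
  qed
  finally show ?thesis .
qed



theorem mainTheorem3:
  fixes VG :: "'a set" and EG :: "'a set set"
    and VH :: "'b set" and EH :: "'b set set"
    and j kG kH :: nat and c :: int and g h :: "real poly"
  assumes "1 \<le> j" "j \<le> kG" "kG \<le> kH"
    and "is_biclique j kG VG EG" and "is_biclique j kH VH EH"
    and "chromatic_poly VG EG = falling_poly kG * g"
    and "chromatic_poly VH EH = falling_poly kH * h"
  shows "g = smult ((-1) ^ j) (pcompose h [:of_int c, -1:]) \<longleftrightarrow>
    (\<forall>i\<le>j. int (num_matchings (compl_edges VG EG) i) =
       (\<Sum>l=0..i. (-1) ^ l * int (num_matchings (compl_edges VH EH) l)
          * int ((j - l) choose (j - i))
          * falling_int (int kG + int kH + int j - c - int l - 1) (i - l)))"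
proof -
  define mG where "mG i = real (num_matchings (compl_edges VG EG) i)" for i
  define mH where "mH i = real (num_matchings (compl_edges VH EH) i)" for i
  define a where "a l = real kG + real kH + real j - real_of_int c - real l - 1" for l
  define Rr where "Rr i = (\<Sum>l=0..i. (-1) ^ l * mH l * real ((j - l) choose (j - i)) * ff (a l) (i - l))" for i
  define Ri where "Ri i = (\<Sum>l=0..i. (-1) ^ l * int (num_matchings (compl_edges VH EH) l)
          * int ((j - l) choose (j - i))
          * falling_int (int kG + int kH + int j - c - int l - 1) (i - l))" for i
  have castR: "real_of_int (Ri i) = Rr i" for i
    unfolding Ri_def Rr_def mH_def a_def by (simp add: falling_int_real)
  have g: "g = (\<Sum>i\<le>j. smult (mG i) (pcompose (falling_poly (j - i)) [:- real kG, 1:]))"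
    using chrom_formula[OF assms(4)] assms(6) falling_poly_nz[of kG] unfolding mG_def by simp
  have h: "h = (\<Sum>i\<le>j. smult (mH i) (pcompose (falling_poly (j - i)) [:- real kH, 1:]))"
    using chrom_formula[OF assms(5)] assms(7) falling_poly_nz[of kH] unfolding mH_def by simp
  have pg: "poly g x = (\<Sum>i\<le>j. mG i * ff (x - real kG) (j - i))" for x
    unfolding g by (rule poly_G0)
  have ph: "poly h y = (\<Sum>i\<le>j. mH i * ff (y - real kH) (j - i))" for y
    unfolding h by (rule poly_G0)
  have K: "(-1) ^ j * poly h (real_of_int c - x) = (\<Sum>i\<le>j. Rr i * ff (x - real kG) (j - i))" for x
    unfolding ph Rr_def a_def by (rule key_identity)
  have "g = smult ((-1) ^ j) (pcompose h [:of_int c, -1:]) \<longleftrightarrow>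
      (\<forall>x. poly g x = (-1) ^ j * poly h (real_of_int c - x))"
    by (simp add: poly_eq_poly_eq_iff[symmetric] fun_eq_iff poly_pcompose)
  also have "\<dots> \<longleftrightarrow> (\<forall>x. (\<Sum>i\<le>j. (mG i - Rr i) * ff (x - real kG) (j - i)) = 0)"
    unfolding pg K by (simp add: left_diff_distrib sum_subtractf)
  also have "\<dots> \<longleftrightarrow> (\<forall>i\<le>j. mG i = Rr i)"
  proof
    assume H: "\<forall>x. (\<Sum>i\<le>j. (mG i - Rr i) * ff (x - real kG) (j - i)) = 0"
    have "(\<Sum>t\<le>j. (mG (j - t) - Rr (j - t)) * ff y t) = 0" for y
    proof -
      have "(\<Sum>t\<le>j. (mG (j - t) - Rr (j - t)) * ff y t)
          = (\<Sum>t\<le>j. (mG (j - t) - Rr (j - t)) * ff ((y + real kG) - real kG) (j - (j - t)))"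
        by (intro sum.cong) auto
      also have "\<dots> = (\<Sum>i\<le>j. (mG i - Rr i) * ff ((y + real kG) - real kG) (j - i))"
        by (rule sum_rev_atMost[symmetric])
      also have "\<dots> = 0" using H by blast
      finally show ?thesis .
    qed
    then have Z: "\<forall>t\<le>j. mG (j - t) - Rr (j - t) = 0" by (rule ff_indep)
    show "\<forall>i\<le>j. mG i = Rr i"
    proof (intro allI impI)
      fix i assume "i \<le> j"
      then have "mG (j - (j - i)) - Rr (j - (j - i)) = 0" using Z[rule_format, of "j - i"] by simp
      then show "mG i = Rr i" using \<open>i \<le> j\<close> by simp
    qed
  qed simp
  also have "\<dots> \<longleftrightarrow> (\<forall>i\<le>j. int (num_matchings (compl_edges VG EG) i) = Ri i)"
  proof -
    have "mG i = Rr i \<longleftrightarrow> int (num_matchings (compl_edges VG EG) i) = Ri i" for i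
    proof -
      have "mG i = real_of_int (int (num_matchings (compl_edges VG EG) i))" unfolding mG_def by simp
      then show ?thesis using castR[of i] by (metis of_int_eq_iff)
    qed
    then show ?thesis by simp
  qed
  finally show ?thesis unfolding Ri_def .
qed

end
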